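(* Let $\mathcal{H}$ be a separable infinite-dimensional complex Hilbert space. Suppose that $\sigma$ is a right closed subset of $[0,1]$ with $1\in\sigma$. Then there exists a quasinilpotent operator $T\in\mathcal{B}(\mathcal{H})$ such that $\Lambda(T)=\sigma$.
   Context: An operator $T$ is quasinilpotent if $\sigma(T)=\{0\}$. For quasinilpotent $T$ and $x\neq 0$, $k_x(T)=\limsup_{\lambda\to0}\frac{\ln\|(\lambda-T)^{-1}x\|}{\ln\|(\lambda-T)^{-1}\|}$, and the power set is $\Lambda(T)=\{k_x(T): x\neq0\}$. A nonempty set $X\subseteq\mathbb{R}$ is right closed if $\sup Y\in X$ for every nonempty bounded subset $Y$ of $X$. *)

theory Defs
  imports "HOL-Analysis.Analysis"
begin

text \<open>The model of a separable infinite-dimensional complex Hilbert space: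
  the sequence space l2(N; C).  Every such space is unitarily equivalent to it.\<close>

definition l2 :: "(nat \<Rightarrow> complex) set" where
  "l2 = {x. summable (\<lambda>n. (cmod (x n))^2)}"

definition l2norm :: "(nat \<Rightarrow> complex) \<Rightarrow> real" where
  "l2norm x = sqrt (\<Sum>n. (cmod (x n))^2)"

definition bounded_op :: "((nat \<Rightarrow> complex) \<Rightarrow> (nat \<Rightarrow> complex)) \<Rightarrow> bool" where
  "bounded_op T \<longleftrightarrow>
     (\<forall>x\<in>l2. T x \<in> l2) \<and>
     (\<forall>x\<in>l2. \<forall>y\<in>l2. T (\<lambda>n. x n + y n) = (\<lambda>n. T x n + T y n)) \<and>
     (\<forall>x\<in>l2. \<forall>c::complex. T (\<lambda>n. c * x n) = (\<lambda>n. c * T x n)) \<and>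
     (\<exists>K. \<forall>x\<in>l2. l2norm (T x) \<le> K * l2norm x)"

definition opnorm :: "((nat \<Rightarrow> complex) \<Rightarrow> (nat \<Rightarrow> complex)) \<Rightarrow> real" where
  "opnorm A = Sup {l2norm (A x) | x. x \<in> l2 \<and> l2norm x \<le> 1}"

definition shift_op :: "complex \<Rightarrow> ((nat \<Rightarrow> complex) \<Rightarrow> (nat \<Rightarrow> complex))
    \<Rightarrow> (nat \<Rightarrow> complex) \<Rightarrow> (nat \<Rightarrow> complex)" where
  "shift_op l T x = (\<lambda>n. l * x n - T x n)"

definition invertible_op :: "((nat \<Rightarrow> complex) \<Rightarrow> (nat \<Rightarrow> complex)) \<Rightarrow> bool" where
  "invertible_op A \<longleftrightarrow> (\<exists>S. bounded_op S \<and> (\<forall>x\<in>l2. S (A x) = x \<and> A (S x) = x))"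

definition op_spectrum :: "((nat \<Rightarrow> complex) \<Rightarrow> (nat \<Rightarrow> complex)) \<Rightarrow> complex set" where
  "op_spectrum T = {l. \<not> invertible_op (shift_op l T)}"

definition quasinilpotent :: "((nat \<Rightarrow> complex) \<Rightarrow> (nat \<Rightarrow> complex)) \<Rightarrow> bool" where
  "quasinilpotent T \<longleftrightarrow> op_spectrum T = {0}"

definition resolvent :: "((nat \<Rightarrow> complex) \<Rightarrow> (nat \<Rightarrow> complex)) \<Rightarrow> complex
    \<Rightarrow> (nat \<Rightarrow> complex) \<Rightarrow> (nat \<Rightarrow> complex)" where
  "resolvent T l x = (THE y. y \<in> l2 \<and> shift_op l T y = x)"

definition local_power :: "((nat \<Rightarrow> complex) \<Rightarrow> (nat \<Rightarrow> complex)) \<Rightarrow> (nat \<Rightarrow> complex) \<Rightarrow> ereal" where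
  "local_power T x = Limsup (at (0::complex))
     (\<lambda>l. ereal (ln (l2norm (resolvent T l x)) / ln (opnorm (resolvent T l))))"

definition power_set :: "((nat \<Rightarrow> complex) \<Rightarrow> (nat \<Rightarrow> complex)) \<Rightarrow> ereal set" where
  "power_set T = {local_power T x | x. x \<in> l2 \<and> x \<noteq> (\<lambda>n. 0)}"

definition right_closed :: "real set \<Rightarrow> bool" where
  "right_closed X \<longleftrightarrow> X \<noteq> {} \<and> (\<forall>Y. Y \<noteq> {} \<and> Y \<subseteq> X \<and> bdd_above Y \<longrightarrow> Sup Y \<in> X)"

end

theory Submission
  imports Defs "HOL-Real_Asymp.Real_Asymp"
begin


lemma l2_summable: "x \<in> l2 \<Longrightarrow> summable (\<lambda>n. (cmod (x n))^2)"
  by (simp add: l2_def)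

lemma l2norm_nonneg: "x \<in> l2 \<Longrightarrow> 0 \<le> l2norm x"
  by (simp add: l2norm_def l2_def suminf_nonneg)

lemma l2norm_coord:
  assumes "x \<in> l2" shows "cmod (x n) \<le> l2norm x"
proof -
  have "(\<Sum>m\<in>{n}. (cmod (x m))^2) \<le> (\<Sum>m. (cmod (x m))^2)"
    using assms by (intro sum_le_suminf) (auto simp: l2_def)
  then have "(cmod (x n))^2 \<le> (\<Sum>m. (cmod (x m))^2)" by simp
  then have "sqrt ((cmod (x n))^2) \<le> l2norm x" unfolding l2norm_def
    using real_sqrt_le_mono by blast
  then show ?thesis by simp
qed

lemma CS_weighted:
  fixes c b :: "nat \<Rightarrow> real"
  assumes "\<And>k. 0 \<le> c k"
  shows "(\<Sum>k\<in>I. c k * b k)^2 \<le> (\<Sum>k\<in>I. c k) * (\<Sum>k\<in>I. c k * (b k)^2)"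
proof -
  have "(\<Sum>k\<in>I. sqrt (c k) * (sqrt (c k) * b k))^2
        \<le> (\<Sum>k\<in>I. (sqrt (c k))^2) * (\<Sum>k\<in>I. (sqrt (c k) * b k)^2)"
    by (rule Cauchy_Schwarz_ineq_sum)
  moreover have "\<And>k. sqrt (c k) * (sqrt (c k) * b k) = c k * b k"
    using assms by (simp add: mult.assoc[symmetric])
  moreover have "\<And>k. (sqrt (c k))^2 = c k" using assms by simp
  moreover have "\<And>k. (sqrt (c k) * b k)^2 = c k * (b k)^2"
    using assms by (simp add: power_mult_distrib)
  ultimately show ?thesis by simp
qed

lemma young:
  fixes c :: "nat \<Rightarrow> real" and x y :: "nat \<Rightarrow> complex"
  assumes x: "x \<in> l2" and c0: "\<And>k. 0 \<le> c k" and cs: "summable c"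
    and bd: "\<And>i j. cmod (y (prod_encode (i,j))) \<le> (\<Sum>k\<le>j. c k * cmod (x (prod_encode (i, j-k))))"
  shows "y \<in> l2 \<and> l2norm y \<le> suminf c * l2norm x"
proof -
  define C where "C = suminf c"
  define X where "X = (\<Sum>n. (cmod (x n))^2)"
  have C0: "0 \<le> C" unfolding C_def using cs c0 by (rule suminf_nonneg)
  have X0: "0 \<le> X" unfolding X_def using x by (intro suminf_nonneg) (auto simp: l2_def)
  define ii where "ii n = fst (prod_decode n)" for n
  define jj where "jj n = snd (prod_decode n)" for n
  define p where "p k n = prod_encode (ii n, jj n - k)" for k n
  have enc: "n = prod_encode (ii n, jj n)" for n unfolding ii_def jj_def by simp
  have jjle: "jj n \<le> n" for n using le_prod_encode_2[of "jj n" "ii n"] enc[of n] by simp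
  have csum: "(\<Sum>k\<in>I. c k) \<le> C" if "finite I" for I
    unfolding C_def using cs that c0 by (intro sum_le_suminf) auto
  have pt: "(cmod (y n))^2 \<le> C * (\<Sum>k\<le>jj n. c k * (cmod (x (p k n)))^2)" for n
  proof -
    have "cmod (y n) \<le> (\<Sum>k\<le>jj n. c k * cmod (x (p k n)))"
      using bd[of "ii n" "jj n"] enc[of n] unfolding p_def by simp
    then have "(cmod (y n))^2 \<le> (\<Sum>k\<le>jj n. c k * cmod (x (p k n)))^2"
      by (intro power_mono) auto
    also have "\<dots> \<le> (\<Sum>k\<le>jj n. c k) * (\<Sum>k\<le>jj n. c k * (cmod (x (p k n)))^2)"
      by (rule CS_weighted[OF c0])
    also have "\<dots> \<le> C * (\<Sum>k\<le>jj n. c k * (cmod (x (p k n)))^2)"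
      by (intro mult_right_mono csum) (auto intro!: sum_nonneg mult_nonneg_nonneg c0)
    finally show ?thesis .
  qed
  have inner: "(\<Sum>n\<in>{n\<in>{..<N}. k \<le> jj n}. (cmod (x (p k n)))^2) \<le> X" for N k
  proof -
    have inj: "inj_on (p k) {n\<in>{..<N}. k \<le> jj n}"
    proof (rule inj_onI)
      fix n n' assume a: "n \<in> {n\<in>{..<N}. k \<le> jj n}" "n' \<in> {n\<in>{..<N}. k \<le> jj n}" "p k n = p k n'"
      then have "ii n = ii n'" "jj n - k = jj n' - k" unfolding p_def
        using prod_encode_eq by blast+
      with a have "ii n = ii n'" "jj n = jj n'" by auto
      then show "n = n'" using enc by metis
    qed
    have "(\<Sum>n\<in>{n\<in>{..<N}. k \<le> jj n}. (cmod (x (p k n)))^2)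
          = (\<Sum>m\<in>p k ` {n\<in>{..<N}. k \<le> jj n}. (cmod (x m))^2)"
      using sum.reindex[OF inj, of "\<lambda>m. (cmod (x m))^2"] by simp
    also have "\<dots> \<le> X" unfolding X_def using x by (intro sum_le_suminf) (auto simp: l2_def)
    finally show ?thesis .
  qed
  have partial: "(\<Sum>n<N. (cmod (y n))^2) \<le> C * (C * X)" for N
  proof -
    have "(\<Sum>n<N. (cmod (y n))^2) \<le> (\<Sum>n<N. C * (\<Sum>k\<le>jj n. c k * (cmod (x (p k n)))^2))"
      by (intro sum_mono pt)
    also have "\<dots> = C * (\<Sum>n<N. (\<Sum>k<N. if k \<le> jj n then c k * (cmod (x (p k n)))^2 else 0))"
    proof -
      have "(\<Sum>k\<le>jj n. c k * (cmod (x (p k n)))^2) = (\<Sum>k<N. if k \<le> jj n then c k * (cmod (x (p k n)))^2 else 0)"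
        if "n < N" for n
      proof -
        have "{..jj n} = {k\<in>{..<N}. k \<le> jj n}" using jjle[of n] that by auto
        then have "(\<Sum>k\<le>jj n. c k * (cmod (x (p k n)))^2) = (\<Sum>k\<in>{k\<in>{..<N}. k \<le> jj n}. c k * (cmod (x (p k n)))^2)"
          by simp
        also have "\<dots> = (\<Sum>k<N. if k \<le> jj n then c k * (cmod (x (p k n)))^2 else 0)"
          by (rule sum.inter_filter) simp
        finally show ?thesis .
      qed
      then show ?thesis by (simp add: sum_distrib_left)
    qed
    also have "\<dots> = C * (\<Sum>k<N. c k * (\<Sum>n\<in>{n\<in>{..<N}. k \<le> jj n}. (cmod (x (p k n)))^2))"
      by (subst sum.swap) (simp add: sum.inter_filter[symmetric] sum_distrib_left if_distrib cong: if_cong)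
    also have "\<dots> \<le> C * (\<Sum>k<N. c k * X)"
      by (intro mult_left_mono C0 sum_mono mult_left_mono inner c0)
    also have "\<dots> = C * ((\<Sum>k<N. c k) * X)" by (simp add: sum_distrib_right)
    also have "\<dots> \<le> C * (C * X)"
      by (intro mult_left_mono C0 mult_right_mono X0 csum) auto
    finally show ?thesis .
  qed
  have sy: "summable (\<lambda>n. (cmod (y n))^2)"
    by (rule summableI_nonneg_bounded[OF _ partial]) auto
  have "(\<Sum>n. (cmod (y n))^2) \<le> C * (C * X)"
    by (rule suminf_le_const[OF sy partial])
  then have "l2norm y \<le> sqrt (C^2 * X)" unfolding l2norm_def
    by (simp add: power2_eq_square mult.assoc)
  also have "\<dots> = C * l2norm x" using C0 X0 by (simp add: real_sqrt_mult l2norm_def X_def)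
  finally show ?thesis using sy by (simp add: l2_def C_def)
qed


definition aa :: "real \<Rightarrow> real" where "aa t = (if t = 0 then 0 else exp (-1/t))"

definition Top :: "(nat \<Rightarrow> real) \<Rightarrow> (nat \<Rightarrow> complex) \<Rightarrow> (nat \<Rightarrow> complex)" where
  "Top s x n = (case prod_decode n of (i,j) \<Rightarrow>
     if j = 0 then 0 else complex_of_real (aa (s i) ^ (2*j-1)) * x (prod_encode (i, j-1)))"

definition Res :: "(nat \<Rightarrow> real) \<Rightarrow> complex \<Rightarrow> (nat \<Rightarrow> complex) \<Rightarrow> (nat \<Rightarrow> complex)" where
  "Res s l x n = (case prod_decode n of (i,j) \<Rightarrow>
     \<Sum>k\<le>j. complex_of_real (aa (s i) ^ ((2*(j-k)+k)*k)) / l^(k+1) * x (prod_encode (i, j-k)))"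

lemma Top_enc: "Top s x (prod_encode (i,j)) =
   (if j = 0 then 0 else complex_of_real (aa (s i) ^ (2*j-1)) * x (prod_encode (i, j-1)))"
  by (simp add: Top_def prod_encode_inverse)

lemma Res_enc: "Res s l x (prod_encode (i,j)) =
   (\<Sum>k\<le>j. complex_of_real (aa (s i) ^ ((2*(j-k)+k)*k)) / l^(k+1) * x (prod_encode (i, j-k)))"
  by (simp add: Res_def prod_encode_inverse)

lemma fun_eq_enc: "(\<And>i j. f (prod_encode (i,j)) = g (prod_encode (i,j))) \<Longrightarrow> f = g"
  by (metis ext prod_decode_inverse surj_pair)

lemma aa_nonneg: "0 \<le> aa t" by (simp add: aa_def)

lemma aa_le1: assumes "0 \<le> t" "t \<le> 1" shows "aa t \<le> exp (-1)"
proof (cases "t = 0")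
  case False
  then have "1 \<le> 1/t" using assms by (simp add: field_simps)
  then show ?thesis using False by (simp add: aa_def)
qed (simp add: aa_def)

lemma aa_le1': assumes "0 \<le> t" "t \<le> 1" shows "aa t \<le> 1"
  using aa_le1[OF assms] by (meson exp_le_one_iff neg_le_0_iff_le order_trans zero_le_one)

lemma aa_one: "aa 1 = exp (-1)" by (simp add: aa_def)

lemma Top_bounded:
  assumes s: "\<forall>i. 0 \<le> s i \<and> s i \<le> 1"
  shows "bounded_op (Top s)"
proof -
  define c :: "nat \<Rightarrow> real" where "c k = (if k = 1 then 1 else 0)" for k
  have cs: "summable c" unfolding c_def
    by (rule summable_finite[of "{1}"]) auto
  have csum: "suminf c = 1" unfolding c_def
    by (subst suminf_finite[of "{1}"]) auto
  have bd: "cmod (Top s x (prod_encode (i,j))) \<le> (\<Sum>k\<le>j. c k * cmod (x (prod_encode (i, j-k))))" for x i j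
  proof (cases "j = 0")
    case True then show ?thesis by (simp add: Top_enc c_def)
  next
    case False
    have "(\<Sum>k\<le>j. c k * cmod (x (prod_encode (i, j-k)))) = (\<Sum>k\<in>{1}. cmod (x (prod_encode (i, j-k))))"
      unfolding c_def using False
      by (intro sum.mono_neutral_cong_right) auto
    moreover have "aa (s i) ^ (2*j-1) \<le> 1"
      using aa_le1'[of "s i"] s[rule_format, of i] aa_nonneg by (simp add: power_le_one)
    ultimately show ?thesis using False aa_nonneg[of "s i"]
      by (simp add: Top_enc norm_mult norm_power mult_left_le_one_le)
  qed
  have Y: "x \<in> l2 \<Longrightarrow> Top s x \<in> l2 \<and> l2norm (Top s x) \<le> suminf c * l2norm x" for x
    by (rule young[OF _ _ cs bd]) (auto simp: c_def)
  show ?thesis unfolding bounded_op_def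
  proof (intro conjI ballI allI exI)
    show "Top s x \<in> l2" if "x \<in> l2" for x using Y[OF that] by simp
    show "Top s (\<lambda>n. x n + y n) = (\<lambda>n. Top s x n + Top s y n)" for x y
      by (rule fun_eq_enc) (simp add: Top_enc distrib_left)
    show "Top s (\<lambda>n. c * x n) = (\<lambda>n. c * Top s x n)" for x and c :: complex
      by (rule fun_eq_enc) (simp add: Top_enc mult_ac)
    show "l2norm (Top s x) \<le> 1 * l2norm x" if "x \<in> l2" for x using Y[OF that] csum by simp
  qed
qed

lemma shift_Res:
  assumes l: "l \<noteq> 0"
  shows "shift_op l (Top s) (Res s l x) = x"
proof (rule fun_eq_enc)
  fix i j
  define a where "a = complex_of_real (aa (s i))"
  have R: "Res s l x (prod_encode (i,j)) = (\<Sum>k\<le>j. a ^ ((2*(j-k)+k)*k) / l^(k+1) * x (prod_encode (i, j-k)))" for j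
    by (simp add: Res_enc a_def)
  show "shift_op l (Top s) (Res s l x) (prod_encode (i,j)) = x (prod_encode (i,j))"
  proof (cases j)
    case 0
    then show ?thesis using l by (simp add: shift_op_def Top_enc R)
  next
    case (Suc m)
    have T: "Top s (Res s l x) (prod_encode (i,j)) = a^(2*m+1) * (\<Sum>k\<le>m. a ^ ((2*(m-k)+k)*k) / l^(k+1) * x (prod_encode (i, m-k)))"
      using Suc by (simp add: Top_enc R a_def)
    have "l * Res s l x (prod_encode (i,j)) = (\<Sum>k\<le>Suc m. a ^ ((2*(Suc m-k)+k)*k) / l^k * x (prod_encode (i, Suc m-k)))"
      using Suc l by (simp add: R sum_distrib_left field_simps)
    also have "\<dots> = x (prod_encode (i, Suc m)) + (\<Sum>k\<le>m. a ^ ((2*(Suc m-Suc k)+Suc k)*Suc k) / l^Suc k * x (prod_encode (i, Suc m-Suc k)))"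
      by (subst sum.atMost_Suc_shift) simp
    also have "(\<Sum>k\<le>m. a ^ ((2*(Suc m-Suc k)+Suc k)*Suc k) / l^Suc k * x (prod_encode (i, Suc m-Suc k)))
       = a^(2*m+1) * (\<Sum>k\<le>m. a ^ ((2*(m-k)+k)*k) / l^(k+1) * x (prod_encode (i, m-k)))"
      unfolding sum_distrib_left
    proof (intro sum.cong refl)
      fix k assume "k \<in> {..m}"
      then have k: "k \<le> m" by simp
      have e: "(2*(Suc m-Suc k)+Suc k)*Suc k = (2*m+1) + (2*(m-k)+k)*k"
      proof -
        obtain d where d: "m = k + d" using k le_Suc_ex by blast
        show ?thesis unfolding d by (simp add: algebra_simps)
      qed
      show "a ^ ((2*(Suc m-Suc k)+Suc k)*Suc k) / l^Suc k * x (prod_encode (i, Suc m-Suc k))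
          = a^(2*m+1) * (a ^ ((2*(m-k)+k)*k) / l^(k+1) * x (prod_encode (i, m-k)))"
        unfolding e power_add by (simp add: mult_ac)
    qed
    finally show ?thesis using Suc T by (simp add: shift_op_def)
  qed
qed

lemma shift_inj:
  assumes l: "l \<noteq> 0" and eq: "shift_op l (Top s) y = shift_op l (Top s) z"
  shows "y = z"
proof (rule fun_eq_enc)
  fix i j
  show "y (prod_encode (i,j)) = z (prod_encode (i,j))"
  proof (induction j)
    case 0
    have "shift_op l (Top s) y (prod_encode (i,0)) = shift_op l (Top s) z (prod_encode (i,0))"
      using eq by simp
    then show ?case using l by (simp add: shift_op_def Top_enc)
  next
    case (Suc j)
    have "shift_op l (Top s) y (prod_encode (i,Suc j)) = shift_op l (Top s) z (prod_encode (i,Suc j))"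
      using eq by simp
    then show ?case using l Suc by (simp add: shift_op_def Top_enc)
  qed
qed


lemma amgm:
  assumes t: "0 \<le> t" "t \<le> 1" and y: "0 < y"
  shows "y^k * aa t ^ (k*k) \<le> exp (t * (ln y)^2 / 4)"
proof (cases "t = 0")
  case True
  then show ?thesis by (cases k) (auto simp: aa_def)
next
  case False
  then have tp: "0 < t" using t by simp
  have "y^k = exp (real k * ln y)" using y by (simp add: exp_of_nat_mult)
  moreover have "aa t ^ (k*k) = exp (- (real k * real k) / t)"
    using False by (simp add: aa_def exp_of_nat_mult[symmetric] field_simps)
  moreover have "real k * ln y + - (real k * real k) / t \<le> t * (ln y)^2 / 4"
  proof -
    have "0 \<le> (t * ln y / 2 - real k)^2" by simp
    then have "t * (real k * ln y) - real k * real k \<le> t * (t * (ln y)^2 / 4)"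
      by (simp add: power2_eq_square algebra_simps)
    then show ?thesis using tp by (simp add: field_simps)
  qed
  ultimately show ?thesis by (simp flip: exp_add)
qed

lemma Res_bound:
  assumes l: "l \<noteq> 0" and x: "x \<in> l2" and S: "0 \<le> S" "S \<le> 1"
    and s: "\<forall>i. 0 \<le> s i \<and> s i \<le> 1"
    and sup: "\<And>i j. x (prod_encode (i,j)) \<noteq> 0 \<Longrightarrow> s i \<le> S"
  shows "Res s l x \<in> l2 \<and> l2norm (Res s l x) \<le> 2 * (1 / cmod l) * exp (S * (ln (2 / cmod l))^2 / 4) * l2norm x"
proof -
  define r where "r = 1 / cmod l"
  have r0: "0 < r" using l by (simp add: r_def)
  define E where "E = exp (S * (ln (2*r))^2 / 4)"
  define c where "c k = r * E * (1/2)^k" for k :: nat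
  have cs: "summable c" unfolding c_def by (intro summable_mult summable_geometric) simp
  have csum: "suminf c = 2 * r * E"
  proof -
    have g: "(\<Sum>k. (1/2::real)^k) = 2" using suminf_geometric[of "1/2::real"] by simp
    show ?thesis unfolding c_def by (subst suminf_mult) (simp_all add: g)
  qed
  have c0: "0 \<le> c k" for k using r0 by (simp add: c_def E_def)
  have trm: "cmod (complex_of_real (aa (s i) ^ ((2*(j-k)+k)*k)) / l^(k+1) * x (prod_encode (i, j-k)))
      \<le> c k * cmod (x (prod_encode (i, j-k)))" for i j k
  proof (cases "x (prod_encode (i, j-k)) = 0")
    case True then show ?thesis by simp
  next
    case False
    have si: "s i \<le> S" using sup[OF False] .
    have a0: "0 \<le> aa (s i)" and a1: "aa (s i) \<le> 1" using aa_nonneg aa_le1' s[rule_format, of i] by auto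
    have "aa (s i) ^ ((2*(j-k)+k)*k) \<le> aa (s i) ^ (k*k)"
      using a0 a1 by (intro power_decreasing) auto
    have "r^(k+1) * aa (s i) ^ ((2*(j-k)+k)*k) \<le> r^(k+1) * aa (s i) ^ (k*k)"
      by (intro mult_left_mono) (use \<open>aa (s i) ^ ((2*(j-k)+k)*k) \<le> aa (s i) ^ (k*k)\<close> r0 in auto)
    also have "\<dots> = r * (1/2)^k * ((2*r)^k * aa (s i) ^ (k*k))"
      by (simp add: power_mult_distrib field_simps)
    also have "\<dots> \<le> r * (1/2)^k * exp (s i * (ln (2*r))^2 / 4)"
      using amgm[of "s i" "2*r" k] s[rule_format, of i] r0 by (intro mult_left_mono) auto
    also have "\<dots> \<le> c k"
      unfolding c_def E_def using si r0
      by (auto intro!: mult_left_mono mult_right_mono divide_right_mono simp: mult_ac)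
    finally have *: "r^(k+1) * aa (s i) ^ ((2*(j-k)+k)*k) \<le> c k" .
    have "cmod (complex_of_real (aa (s i) ^ ((2*(j-k)+k)*k)) / l^(k+1) * x (prod_encode (i, j-k)))
        = (r^(k+1) * aa (s i) ^ ((2*(j-k)+k)*k)) * cmod (x (prod_encode (i, j-k)))"
      using a0 by (simp add: norm_mult norm_divide norm_power r_def power_one_over field_simps)
    also have "\<dots> \<le> c k * cmod (x (prod_encode (i, j-k)))"
      by (intro mult_right_mono *) simp
    finally show ?thesis .
  qed
  have bd: "cmod (Res s l x (prod_encode (i,j))) \<le> (\<Sum>k\<le>j. c k * cmod (x (prod_encode (i, j-k))))" for i j
    unfolding Res_enc by (rule order_trans[OF norm_sum sum_mono[OF trm]])
  have "Res s l x \<in> l2 \<and> l2norm (Res s l x) \<le> suminf c * l2norm x"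
    by (rule young[OF x c0 cs bd])
  then show ?thesis using csum by (simp add: r_def E_def)
qed

lemma zero_l2: "(\<lambda>n. 0) \<in> l2" and l2norm_zero: "l2norm (\<lambda>n. 0) = 0"
  by (simp_all add: l2_def l2norm_def)

definition unitv :: "nat \<Rightarrow> nat \<Rightarrow> complex" where
  "unitv i = (\<lambda>n. if n = prod_encode (i,0) then 1 else 0)"

lemma unitv_l2: "unitv i \<in> l2" and unitv_norm: "l2norm (unitv i) = 1"
proof -
  have e: "(\<lambda>n. (cmod (unitv i n))^2) = (\<lambda>n. if n = prod_encode (i,0) then 1 else 0)"
    by (auto simp: unitv_def)
  show "unitv i \<in> l2" unfolding l2_def mem_Collect_eq e by (rule summable_finite[of "{prod_encode (i,0)}"]) auto
  have "(\<Sum>n. (cmod (unitv i n))^2) = 1" unfolding e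
    by (subst suminf_finite[of "{prod_encode (i,0)}"]) auto
  then show "l2norm (unitv i) = 1" by (simp add: l2norm_def)
qed

lemma unitv_ne: "unitv i \<noteq> (\<lambda>n. 0)"
  by (metis unitv_def zero_neq_one)

lemma Res_bounded:
  assumes l: "l \<noteq> 0" and s: "\<forall>i. 0 \<le> s i \<and> s i \<le> 1"
  shows "bounded_op (Res s l)"
  unfolding bounded_op_def
proof (intro conjI ballI allI exI)
  have B: "x \<in> l2 \<Longrightarrow> Res s l x \<in> l2 \<and> l2norm (Res s l x) \<le> 2 * (1 / cmod l) * exp (1 * (ln (2 / cmod l))^2 / 4) * l2norm x" for x
    by (rule Res_bound[OF l _ _ _ s]) (use s in auto)
  show "Res s l x \<in> l2" if "x \<in> l2" for x using B[OF that] by simp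
  show "l2norm (Res s l x) \<le> (2 * (1 / cmod l) * exp (1 * (ln (2 / cmod l))^2 / 4)) * l2norm x" if "x \<in> l2" for x
    using B[OF that] by simp
  show "Res s l (\<lambda>n. x n + y n) = (\<lambda>n. Res s l x n + Res s l y n)" for x y
    by (rule fun_eq_enc) (simp add: Res_enc distrib_left sum.distrib)
  show "Res s l (\<lambda>n. c * x n) = (\<lambda>n. c * Res s l x n)" for x and c :: complex
    by (rule fun_eq_enc) (simp add: Res_enc sum_distrib_left mult_ac)
qed

lemma shift_inv:
  assumes l: "l \<noteq> 0" and s: "\<forall>i. 0 \<le> s i \<and> s i \<le> 1"
  shows "invertible_op (shift_op l (Top s))"
  unfolding invertible_op_def
proof (intro exI conjI ballI)
  show "bounded_op (Res s l)" by (rule Res_bounded[OF l s])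
  fix x :: "nat \<Rightarrow> complex"
  show "shift_op l (Top s) (Res s l x) = x" by (rule shift_Res[OF l])
  show "Res s l (shift_op l (Top s) x) = x"
    by (rule shift_inj[OF l]) (rule shift_Res[OF l])
qed

lemma not_inv0: "\<not> invertible_op (shift_op 0 (Top s))"
proof
  assume "invertible_op (shift_op 0 (Top s))"
  then obtain S where "\<forall>x\<in>l2. shift_op 0 (Top s) (S x) = x" unfolding invertible_op_def by blast
  then have "shift_op 0 (Top s) (S (unitv 0)) = unitv 0" using unitv_l2 by blast
  then have "shift_op 0 (Top s) (S (unitv 0)) (prod_encode (0,0)) = unitv 0 (prod_encode (0,0))" by simp
  then show False by (simp add: shift_op_def Top_enc unitv_def)
qed

lemma Top_qn:
  assumes s: "\<forall>i. 0 \<le> s i \<and> s i \<le> 1"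
  shows "quasinilpotent (Top s)"
  unfolding quasinilpotent_def op_spectrum_def
  using shift_inv[OF _ s] not_inv0 by auto

lemma resolvent_eq:
  assumes l: "l \<noteq> 0" and s: "\<forall>i. 0 \<le> s i \<and> s i \<le> 1" and x: "x \<in> l2"
  shows "resolvent (Top s) l x = Res s l x"
  unfolding resolvent_def
proof (rule the_equality)
  show "Res s l x \<in> l2 \<and> shift_op l (Top s) (Res s l x) = x"
    using Res_bounded[OF l s] x shift_Res[OF l, of s x] unfolding bounded_op_def by blast
  show "y = Res s l x" if "y \<in> l2 \<and> shift_op l (Top s) y = x" for y
    using that shift_Res[OF l, of s x] shift_inj[OF l, of s y "Res s l x"] by simp
qed

lemma opnorm_resolvent:
  assumes l: "l \<noteq> 0" and s: "\<forall>i. 0 \<le> s i \<and> s i \<le> 1"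
  shows "opnorm (resolvent (Top s) l) = opnorm (Res s l)"
proof -
  have "{l2norm (resolvent (Top s) l x) | x. x \<in> l2 \<and> l2norm x \<le> 1} = {l2norm (Res s l x) | x. x \<in> l2 \<and> l2norm x \<le> 1}"
  proof (intro Collect_cong iffI)
    fix v assume "\<exists>x. v = l2norm (resolvent (Top s) l x) \<and> x \<in> l2 \<and> l2norm x \<le> 1"
    then obtain x where "v = l2norm (resolvent (Top s) l x)" "x \<in> l2" "l2norm x \<le> 1" by blast
    then show "\<exists>x. v = l2norm (Res s l x) \<and> x \<in> l2 \<and> l2norm x \<le> 1"
      using resolvent_eq[OF l s] by auto
  next
    fix v assume "\<exists>x. v = l2norm (Res s l x) \<and> x \<in> l2 \<and> l2norm x \<le> 1"
    then obtain x where "v = l2norm (Res s l x)" "x \<in> l2" "l2norm x \<le> 1" by blast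
    then show "\<exists>x. v = l2norm (resolvent (Top s) l x) \<and> x \<in> l2 \<and> l2norm x \<le> 1"
      using resolvent_eq[OF l s, of x] by metis
  qed
  then show ?thesis unfolding opnorm_def by simp
qed

lemma opnorm_upper:
  assumes l: "l \<noteq> 0" and s: "\<forall>i. 0 \<le> s i \<and> s i \<le> 1"
  shows "opnorm (Res s l) \<le> 2 * (1 / cmod l) * exp ((ln (2 / cmod l))^2 / 4)"
    and "bdd_above {l2norm (Res s l x) | x. x \<in> l2 \<and> l2norm x \<le> 1}"
proof -
  define B where "B = 2 * (1 / cmod l) * exp ((ln (2 / cmod l))^2 / 4)"
  have B0: "0 \<le> B" unfolding B_def by simp
  have le: "l2norm (Res s l x) \<le> B" if "x \<in> l2" "l2norm x \<le> 1" for x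
  proof -
    have "l2norm (Res s l x) \<le> B * l2norm x"
      using Res_bound[of l x 1 s] l that s unfolding B_def by auto
    also have "\<dots> \<le> B" using that B0 by (simp add: mult_left_le)
    finally show ?thesis .
  qed
  show "bdd_above {l2norm (Res s l x) | x. x \<in> l2 \<and> l2norm x \<le> 1}"
    using le by (auto intro!: bdd_aboveI[of _ B])
  show "opnorm (Res s l) \<le> 2 * (1 / cmod l) * exp ((ln (2 / cmod l))^2 / 4)"
    unfolding opnorm_def B_def[symmetric]
  proof (rule cSup_least)
    show "{l2norm (Res s l x) | x. x \<in> l2 \<and> l2norm x \<le> 1} \<noteq> {}"
      using zero_l2 l2norm_zero by force
  qed (use le in auto)
qed


lemma root_sum:
  assumes p: "0 < p" "p < N"
  shows "(\<Sum>l<N. cis (2 * pi * real l * real p / real N)) = 0"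
proof -
  define w where "w = cis (2 * pi * real p / real N)"
  have N0: "0 < N" using p by simp
  have w1: "w \<noteq> 1"
  proof
    assume "w = 1"
    then have "cos (2 * pi * real p / real N) = 1" unfolding w_def by (metis cis.sel(1) one_complex.sel(1))
    then obtain n :: int where n: "2 * pi * real p / real N = real_of_int n * 2 * pi" using cos_one_2pi_int by blast
    have "real p / real N = (2 * pi * real p / real N) / (2 * pi)" by simp
    also have "\<dots> = real_of_int n" unfolding n by simp
    finally have "real p / real N = real_of_int n" .
    moreover have "0 < real p / real N" "real p / real N < 1" using p by (auto simp: field_simps)
    ultimately have "0 < real_of_int n" "real_of_int n < 1" by simp_all
    then have "0 < n" "n < 1" by simp_all
    then show False by simp
  qed
  have "(\<Sum>l<N. cis (2 * pi * real l * real p / real N)) = (\<Sum>l<N. w ^ l)"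
    by (intro sum.cong refl) (simp add: w_def Complex.DeMoivre mult_ac)
  also have "\<dots> = (w ^ N - 1) / (w - 1)" using w1 by (rule geometric_sum)
  also have "w ^ N = cis (2 * pi * real p)" using N0 by (simp add: w_def Complex.DeMoivre)
  also have "\<dots> = 1"
    using cis_multiple_2pi[of "real p"] by (simp add: mult_ac)
  finally show ?thesis by simp
qed

lemma mean_value_poly:
  fixes b :: "nat \<Rightarrow> complex"
  assumes rho: "0 < \<rho>"
  shows "\<exists>z. cmod z = \<rho> \<and> cmod (b k) \<le> cmod (\<Sum>t\<le>k. b t * z^(k-t))"
proof (rule ccontr)
  assume "\<not> ?thesis"
  then have lt: "\<And>z. cmod z = \<rho> \<Longrightarrow> cmod (\<Sum>t\<le>k. b t * z^(k-t)) < cmod (b k)" by force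
  define N where "N = Suc k"
  define z where "z l = complex_of_real \<rho> * cis (2 * pi * real l / real N)" for l :: nat
  have zn: "cmod (z l) = \<rho>" for l using rho by (simp add: z_def norm_mult)
  have zp: "z l ^ q = complex_of_real (\<rho>^q) * cis (2 * pi * real l * real q / real N)" for l q
  proof -
    have "z l ^ q = (complex_of_real \<rho>)^q * (cis (2*pi*real l/real N))^q" by (simp add: z_def power_mult_distrib)
    also have "\<dots> = complex_of_real (\<rho>^q) * cis (real q * (2*pi*real l/real N))" by (simp only: Complex.DeMoivre of_real_power)
    also have "\<dots> = complex_of_real (\<rho>^q) * cis (2 * pi * real l * real q / real N)" by (simp add: mult_ac)
    finally show ?thesis .
  qed
  have inner: "(\<Sum>l<N. z l ^ (k-t)) = (if t = k then of_nat N else 0)" if "t \<le> k" for t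
  proof (cases "t = k")
    case True then show ?thesis by simp
  next
    case False
    have "(\<Sum>l<N. z l ^ (k-t)) = complex_of_real (\<rho>^(k-t)) * (\<Sum>l<N. cis (2 * pi * real l * real (k-t) / real N))"
      by (simp add: zp sum_distrib_left)
    also have "\<dots> = 0" using False that by (subst root_sum) (auto simp: N_def)
    finally show ?thesis using False by simp
  qed
  have "(\<Sum>l<N. (\<Sum>t\<le>k. b t * z l^(k-t))) = (\<Sum>t\<le>k. b t * (\<Sum>l<N. z l^(k-t)))"
    by (subst sum.swap) (simp add: sum_distrib_left)
  also have "\<dots> = (\<Sum>t\<le>k. if t = k then b t * of_nat N else 0)"
    by (intro sum.cong refl) (simp add: inner)
  also have "\<dots> = b k * of_nat N" by simp
  finally have eq: "(\<Sum>l<N. (\<Sum>t\<le>k. b t * z l^(k-t))) = b k * of_nat N" .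
  have "cmod (b k) * real N = cmod (\<Sum>l<N. (\<Sum>t\<le>k. b t * z l^(k-t)))"
    by (simp add: eq norm_mult)
  also have "\<dots> \<le> (\<Sum>l<N. cmod (\<Sum>t\<le>k. b t * z l^(k-t)))" by (rule norm_sum)
  also have "\<dots> < (\<Sum>l<N. cmod (b k))"
    by (rule sum_strict_mono) (auto simp: N_def intro: lt zn)
  also have "\<dots> = cmod (b k) * real N" by simp
  finally show False by simp
qed

lemma floor_choice:
  fixes u :: real assumes u: "0 \<le> u"
  shows "real (nat \<lfloor>u\<rfloor>) \<le> u" "u < real (nat \<lfloor>u\<rfloor>) + 1"
    "u^2 - 1 \<le> 2 * u * real (nat \<lfloor>u\<rfloor>) - (real (nat \<lfloor>u\<rfloor>))^2"
proof -
  define k where "k = real (nat \<lfloor>u\<rfloor>)"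
  have k: "k = of_int \<lfloor>u\<rfloor>" using u by (simp add: k_def)
  show a: "real (nat \<lfloor>u\<rfloor>) \<le> u" using k k_def by linarith
  show b: "u < real (nat \<lfloor>u\<rfloor>) + 1" using k k_def by linarith
  have "(u - k)^2 \<le> 1" using a b unfolding k_def[symmetric]
    by (intro power_le_one) auto
  then show "u^2 - 1 \<le> 2 * u * real (nat \<lfloor>u\<rfloor>) - (real (nat \<lfloor>u\<rfloor>))^2"
    unfolding k_def[symmetric] by (simp add: power2_eq_square algebra_simps)
qed

lemma Res_unit: "Res s l (unitv i) (prod_encode (i,k)) = complex_of_real (aa (s i) ^ (k*k)) / l^(k+1)"
proof -
  have "Res s l (unitv i) (prod_encode (i,k)) =
     (\<Sum>t\<le>k. if t = k then complex_of_real (aa (s i) ^ ((2*(k-t)+t)*t)) / l^(t+1) else 0)"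
    unfolding Res_enc by (intro sum.cong refl) (auto simp: unitv_def)
  also have "\<dots> = complex_of_real (aa (s i) ^ (k*k)) / l^(k+1)" by simp
  finally show ?thesis .
qed

lemma opnorm_lower:
  assumes s: "\<forall>i. 0 \<le> s i \<and> s i \<le> 1" and i1: "s i1 = 1" and l: "l \<noteq> 0" "cmod l \<le> 1"
  shows "(1 / cmod l) * exp ((ln (1 / cmod l))^2 / 4 - 1) \<le> opnorm (Res s l)"
proof -
  define r where "r = 1 / cmod l"
  have r1: "1 \<le> r" using l by (simp add: r_def field_simps)
  define L where "L = ln r"
  have L0: "0 \<le> L" using r1 by (simp add: L_def)
  define k where "k = nat \<lfloor>L/2\<rfloor>"
  have fc: "(L/2)^2 - 1 \<le> 2 * (L/2) * real k - (real k)^2" unfolding k_def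
    by (rule floor_choice) (use L0 in auto)
  have "cmod (Res s l (unitv i1) (prod_encode (i1,k))) = exp (-1) ^ (k*k) * r^(k+1)"
    unfolding Res_unit i1 aa_one by (simp add: norm_divide norm_power norm_mult r_def field_simps)
  also have "\<dots> = r * exp (real k * L - (real k)^2)"
  proof -
    have "exp (-1) ^ (k*k) = exp (- ((real k)^2))" by (simp add: exp_of_nat_mult[symmetric] power2_eq_square)
    moreover have "r^k = exp (real k * L)" using r1 by (simp add: L_def exp_of_nat_mult)
    ultimately show ?thesis by (simp add: exp_diff exp_minus field_simps)
  qed
  finally have eq: "cmod (Res s l (unitv i1) (prod_encode (i1,k))) = r * exp (real k * L - (real k)^2)" .
  have "r * exp (L^2/4 - 1) \<le> r * exp (real k * L - (real k)^2)"
    using fc r1 by (intro mult_left_mono) (auto simp: power2_eq_square field_simps)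
  also have "\<dots> \<le> l2norm (Res s l (unitv i1))"
    unfolding eq[symmetric] by (rule l2norm_coord) (use Res_bounded[OF l(1) s] unitv_l2 in \<open>auto simp: bounded_op_def\<close>)
  also have "\<dots> \<le> opnorm (Res s l)"
    unfolding opnorm_def
    by (rule cSup_upper[OF _ opnorm_upper(2)[OF l(1) s]]) (use unitv_l2 unitv_norm in auto)
  finally show ?thesis by (simp add: r_def L_def)
qed

lemma Res_lower:
  assumes z0: "\<forall>j<m. x (prod_encode (i,j)) = 0" and rho: "0 < \<rho>"
  shows "\<exists>l. cmod l = \<rho> \<and> cmod (x (prod_encode (i,m))) * aa (s i) ^ ((2*m+k)*k) * (1/\<rho>)^(k+1)
            \<le> cmod (Res s l x (prod_encode (i, m+k)))"
proof -
  define b where "b t = complex_of_real (aa (s i) ^ ((2*(m+k-t)+t)*t)) * x (prod_encode (i, m+k-t))" for t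
  obtain z where z: "cmod z = \<rho>" "cmod (b k) \<le> cmod (\<Sum>t\<le>k. b t * z^(k-t))"
    using mean_value_poly[OF rho, of b k] by blast
  have zne: "z \<noteq> 0" using z rho by auto
  have "Res s z x (prod_encode (i, m+k)) = (\<Sum>t\<le>m+k. complex_of_real (aa (s i) ^ ((2*(m+k-t)+t)*t)) / z^(t+1) * x (prod_encode (i, m+k-t)))"
    by (rule Res_enc)
  also have "\<dots> = (\<Sum>t\<le>k. complex_of_real (aa (s i) ^ ((2*(m+k-t)+t)*t)) / z^(t+1) * x (prod_encode (i, m+k-t)))"
    proof (rule sum.mono_neutral_right)
    show "\<forall>t\<in>{..m+k} - {..k}. complex_of_real (aa (s i) ^ ((2*(m+k-t)+t)*t)) / z^(t+1) * x (prod_encode (i, m+k-t)) = 0"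
    proof
      fix t assume "t \<in> {..m+k} - {..k}"
      then have "m + k - t < m" by auto
      then show "complex_of_real (aa (s i) ^ ((2*(m+k-t)+t)*t)) / z^(t+1) * x (prod_encode (i, m+k-t)) = 0"
        using z0 by simp
    qed
  qed auto
  also have "\<dots> = (\<Sum>t\<le>k. b t * z^(k-t)) / z^(k+1)"
    unfolding sum_divide_distrib
  proof (intro sum.cong refl)
    fix t assume "t \<in> {..k}"
    then have "z^(k+1) = z^(k-t) * z^(t+1)" by (simp add: power_add[symmetric])
    then show "complex_of_real (aa (s i) ^ ((2*(m+k-t)+t)*t)) / z^(t+1) * x (prod_encode (i, m+k-t)) = b t * z^(k-t) / z^(k+1)"
      using zne by (simp add: b_def field_simps)
  qed
  finally have eq: "Res s z x (prod_encode (i, m+k)) = (\<Sum>t\<le>k. b t * z^(k-t)) / z^(k+1)" .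
  have bk: "cmod (b k) = aa (s i) ^ ((2*m+k)*k) * cmod (x (prod_encode (i,m)))"
    by (simp add: b_def norm_mult norm_power aa_nonneg)
  have "cmod (x (prod_encode (i,m))) * aa (s i) ^ ((2*m+k)*k) * (1/\<rho>)^(k+1) = cmod (b k) / \<rho>^(k+1)"
    by (simp add: bk power_one_over)
  also have "\<dots> \<le> cmod (\<Sum>t\<le>k. b t * z^(k-t)) / \<rho>^(k+1)"
    using z(2) rho by (simp add: divide_right_mono)
  also have "\<dots> = cmod (Res s z x (prod_encode (i, m+k)))"
    unfolding eq using z by (simp add: norm_divide norm_power norm_mult)
  finally show ?thesis using z(1) by blast
qed


lemma div_upper:
  fixes a b A B :: real
  assumes "0 < B" "B \<le> b" "a \<le> A" "0 \<le> A"
  shows "a / b \<le> A / B"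
proof -
  have "a / b \<le> A / b" using assms by (intro divide_right_mono) auto
  also have "\<dots> \<le> A / B" using assms by (intro divide_left_mono) auto
  finally show ?thesis .
qed

lemma div_lower:
  fixes a b A B :: real
  assumes "0 < b" "b \<le> B" "A \<le> a" "0 \<le> A"
  shows "A / B \<le> a / b"
proof -
  have "A / B \<le> A / b" using assms by (intro divide_left_mono) auto
  also have "\<dots> \<le> a / b" using assms by (intro divide_right_mono) auto
  finally show ?thesis .
qed

lemma asym_upper:
  fixes S c e :: real
  assumes "0 \<le> S" "0 < e"
  shows "eventually (\<lambda>L. 0 \<le> ln 2 + L + S*(L + ln 2)^2/4 + c \<and> 0 < L + L^2/4 - 1 \<and>
      (ln 2 + L + S*(L + ln 2)^2/4 + c)/(L + L^2/4 - 1) < S + e) at_top"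
proof -
  have t: "((\<lambda>L::real. (ln 2 + L + S*(L + ln 2)^2/4 + c)/(L + L^2/4 - 1)) \<longlongrightarrow> S) at_top"
    using assms by real_asymp
  have e1: "eventually (\<lambda>L. (ln 2 + L + S*(L + ln 2)^2/4 + c)/(L + L^2/4 - 1) < S + e) at_top"
    using order_tendstoD(2)[OF t, of "S + e"] assms by simp
  have e2: "eventually (\<lambda>L::real. L \<ge> max 1 (- c - ln 2)) at_top" by (rule eventually_ge_at_top)
  show ?thesis
  proof (rule eventually_mono[OF eventually_conj[OF e1 e2]])
    fix L :: real assume h: "(ln 2 + L + S*(L + ln 2)^2/4 + c)/(L + L^2/4 - 1) < S + e \<and> L \<ge> max 1 (- c - ln 2)"
    have "0 \<le> S*(L + ln 2)^2/4" using assms by simp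
    moreover have "0 < L + L^2/4 - 1"
    proof -
      have "0 < L^2/4" using h by simp
      then show ?thesis using h by linarith
    qed
    moreover have "L \<ge> - c - ln 2" using h by simp
    ultimately have "0 \<le> ln 2 + L + S*(L + ln 2)^2/4 + c" "0 < L + L^2/4 - 1" by linarith+
    then show "0 \<le> ln 2 + L + S*(L + ln 2)^2/4 + c \<and> 0 < L + L^2/4 - 1 \<and>
      (ln 2 + L + S*(L + ln 2)^2/4 + c)/(L + L^2/4 - 1) < S + e" using h by blast
  qed
qed

lemma asym_lower:
  fixes s c m e :: real
  assumes "0 < s" "0 < e"
  shows "eventually (\<lambda>L. 0 \<le> s*L - 2*m \<and> 0 \<le> c + L + s*L^2/4 - m*L + (m^2 - 1)/s \<and>
      s - e < (c + L + s*L^2/4 - m*L + (m^2 - 1)/s)/(ln 2 + L + (L + ln 2)^2/4)) at_top"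
proof -
  have t: "((\<lambda>L::real. (c + L + s*L^2/4 - m*L + (m^2 - 1)/s)/(ln 2 + L + (L + ln 2)^2/4)) \<longlongrightarrow> s) at_top"
    using assms by real_asymp
  have e1: "eventually (\<lambda>L. s - e < (c + L + s*L^2/4 - m*L + (m^2 - 1)/s)/(ln 2 + L + (L + ln 2)^2/4)) at_top"
    using order_tendstoD(1)[OF t, of "s - e"] assms by simp
  have e3: "eventually (\<lambda>L. 0 < (c + L + s*L^2/4 - m*L + (m^2 - 1)/s)/(ln 2 + L + (L + ln 2)^2/4)) at_top"
    using order_tendstoD(1)[OF t, of 0] assms by simp
  have e2: "eventually (\<lambda>L::real. L \<ge> max 0 (2*m/s)) at_top" by (rule eventually_ge_at_top)
  show ?thesis
  proof (rule eventually_mono[OF eventually_conj[OF e1 eventually_conj[OF e2 e3]]])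
    fix L :: real assume h: "s - e < (c + L + s*L^2/4 - m*L + (m^2 - 1)/s)/(ln 2 + L + (L + ln 2)^2/4) \<and>
       L \<ge> max 0 (2*m/s) \<and> 0 < (c + L + s*L^2/4 - m*L + (m^2 - 1)/s)/(ln 2 + L + (L + ln 2)^2/4)"
    have L0: "0 \<le> L" and Lm: "2*m/s \<le> L" using h by auto
    have "0 < ln (2::real)" by simp
    then have B: "0 < ln 2 + L + (L + ln 2)^2/4" using L0 by (simp add: add_pos_nonneg)
    have "2*m \<le> s*L" using Lm assms by (simp add: field_simps)
    then have "0 \<le> s*L - 2*m" by simp
    moreover have "0 \<le> c + L + s*L^2/4 - m*L + (m^2 - 1)/s"
    proof -
      have "0 < (c + L + s*L^2/4 - m*L + (m^2 - 1)/s)/(ln 2 + L + (L + ln 2)^2/4)" using h by blast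
      then show ?thesis using B by (simp add: zero_less_divide_iff)
    qed
    ultimately show "0 \<le> s*L - 2*m \<and> 0 \<le> c + L + s*L^2/4 - m*L + (m^2 - 1)/s \<and>
      s - e < (c + L + s*L^2/4 - m*L + (m^2 - 1)/s)/(ln 2 + L + (L + ln 2)^2/4)" using h by blast
  qed
qed

lemma asym_zero:
  fixes c :: real
  shows "eventually (\<lambda>L. 0 \<le> c + L \<and> 0 \<le> L) at_top"
  using eventually_ge_at_top[of "max 0 (-c)"] by (rule eventually_mono) auto

lemma Lfilter: "filterlim (\<lambda>l::complex. ln (1 / cmod l)) at_top (at 0)"
proof -
  have "filterlim (\<lambda>l::complex. 1 / cmod l) at_top (at 0)"
  proof -
    have "((\<lambda>l::complex. cmod l) \<longlongrightarrow> 0) (at 0)"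
      by (rule tendsto_norm_zero[OF tendsto_ident_at])
    moreover have "eventually (\<lambda>l::complex. 0 < cmod l) (at 0)"
      by (auto simp: eventually_at_filter)
    ultimately have "filterlim (\<lambda>l::complex. inverse (cmod l)) at_top (at 0)"
      by (rule filterlim_inverse_at_top)
    then show ?thesis by (simp add: inverse_eq_divide)
  qed
  then show ?thesis by (rule filterlim_compose[OF ln_at_top])
qed

lemma Limsup_lower_freq:
  fixes g :: "complex \<Rightarrow> real"
  assumes "\<And>d. 0 < d \<Longrightarrow> \<exists>l. l \<noteq> 0 \<and> cmod l < d \<and> c \<le> g l"
  shows "ereal c \<le> Limsup (at 0) (\<lambda>l. ereal (g l))"
  unfolding Limsup_def
proof (rule INF_greatest)
  fix P assume "P \<in> {P. eventually P (at (0::complex))}"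
  then obtain d where d: "0 < d" "\<And>l. l \<noteq> 0 \<Longrightarrow> dist l 0 < d \<Longrightarrow> P l"
    by (auto simp: eventually_at)
  obtain l where l: "l \<noteq> 0" "cmod l < d" "c \<le> g l" using assms[OF d(1)] by blast
  have "P l" using d(2)[OF l(1)] l(2) by simp
  then show "ereal c \<le> (SUP x\<in>{x. P x}. ereal (g x))"
    using l(3) by (intro SUP_upper2[of l]) auto
qed


lemma ln4:
  fixes a b d E :: real
  assumes "0 < a" "0 < b" "0 < d"
  shows "ln (a * b * exp E * d) = ln a + ln b + E + ln d"
  using assms by (simp add: ln_mult)

lemma first_nz:
  assumes "x (prod_encode (i,j)) \<noteq> 0"
  shows "\<exists>m. x (prod_encode (i,m)) \<noteq> 0 \<and> (\<forall>j<m. x (prod_encode (i,j)) = 0)"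
proof -
  define m where "m = (LEAST m. x (prod_encode (i,m)) \<noteq> 0)"
  have "x (prod_encode (i,m)) \<noteq> 0" unfolding m_def by (rule LeastI[of _ j]) (rule assms)
  moreover have "\<forall>j<m. x (prod_encode (i,j)) = 0" unfolding m_def using not_less_Least by blast
  ultimately show ?thesis by blast
qed

lemma Res_first:
  assumes "\<forall>j<m. x (prod_encode (i,j)) = 0"
  shows "Res s l x (prod_encode (i,m)) = x (prod_encode (i,m)) / l"
proof -
  have "Res s l x (prod_encode (i,m)) = (\<Sum>t\<in>{0}. complex_of_real (aa (s i) ^ ((2*(m-t)+t)*t)) / l^(t+1) * x (prod_encode (i, m-t)))"
    unfolding Res_enc
  proof (rule sum.mono_neutral_right)
    show "\<forall>t\<in>{..m} - {0}. complex_of_real (aa (s i) ^ ((2*(m-t)+t)*t)) / l^(t+1) * x (prod_encode (i, m-t)) = 0"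
    proof
      fix t assume "t \<in> {..m} - {0}"
      then have "m - t < m" by auto
      then show "complex_of_real (aa (s i) ^ ((2*(m-t)+t)*t)) / l^(t+1) * x (prod_encode (i, m-t)) = 0"
        using assms by simp
    qed
  qed auto
  then show ?thesis by simp
qed

lemma ereal_lower_eps:
  fixes X :: ereal
  assumes "\<And>e. 0 < e \<Longrightarrow> ereal (c - e) \<le> X"
  shows "ereal c \<le> X"
proof (rule ereal_le_epsilon2)
  fix e :: real assume e: "0 < e"
  have "ereal c = ereal (c - e) + ereal e" by simp
  also have "\<dots> \<le> X + ereal e" using assms[OF e] by (intro add_mono) auto
  finally show "ereal c \<le> X + ereal e" .
qed

lemma ereal_upper_eps:
  fixes X :: ereal
  assumes "\<And>e. 0 < e \<Longrightarrow> X \<le> ereal (c + e)"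
  shows "X \<le> ereal c"
  by (rule ereal_le_epsilon2) (use assms in simp)

locale setting =
  fixes s :: "nat \<Rightarrow> real" and i1 :: nat
  assumes s: "\<forall>i. 0 \<le> s i \<and> s i \<le> 1" and i1: "s i1 = 1"
begin

lemma opn_bounds:
  assumes l: "l \<noteq> 0" "cmod l \<le> 1" and L1: "1 \<le> ln (1 / cmod l)"
  shows "0 < ln (opnorm (Res s l))"
    "ln (1 / cmod l) + (ln (1 / cmod l))^2/4 - 1 \<le> ln (opnorm (Res s l))"
    "ln (opnorm (Res s l)) \<le> ln 2 + ln (1 / cmod l) + (ln (1 / cmod l) + ln 2)^2/4"
proof -
  define r where "r = 1 / cmod l"
  have r0: "0 < r" using l by (simp add: r_def)
  define L where "L = ln r"
  have lo: "r * exp (L^2/4 - 1) \<le> opnorm (Res s l)"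
    using opnorm_lower[OF s i1 l] by (simp add: r_def L_def)
  have up: "opnorm (Res s l) \<le> 2 * r * exp ((ln (2 * r))^2 / 4)"
    using opnorm_upper(1)[OF l(1) s] by (simp add: r_def)
  have pos: "0 < r * exp (L^2/4 - 1)" using r0 by simp
  have "ln (r * exp (L^2/4 - 1)) = L + L^2/4 - 1" using r0 by (simp add: ln_mult L_def)
  then have A: "L + L^2/4 - 1 \<le> ln (opnorm (Res s l))"
    using lo pos by (metis ln_le_cancel_iff order_less_le_trans)
  have "ln (opnorm (Res s l)) \<le> ln (2 * r * exp ((ln (2 * r))^2 / 4))"
    using lo pos up by (subst ln_le_cancel_iff) auto
  also have "\<dots> = ln 2 + L + (L + ln 2)^2/4" using r0 by (simp add: ln_mult L_def add.commute)
  finally have B: "ln (opnorm (Res s l)) \<le> ln 2 + L + (L + ln 2)^2/4" .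
  have L1': "1 \<le> L" using L1 by (simp add: L_def r_def)
  have "0 < L^2/4" using L1' by simp
  then have "0 < L + L^2/4 - 1" using L1' by linarith
  then show "0 < ln (opnorm (Res s l))" using A by linarith
  show "ln (1 / cmod l) + (ln (1 / cmod l))^2/4 - 1 \<le> ln (opnorm (Res s l))" using A by (simp add: L_def r_def)
  show "ln (opnorm (Res s l)) \<le> ln 2 + ln (1 / cmod l) + (ln (1 / cmod l) + ln 2)^2/4" using B by (simp add: L_def r_def)
qed

definition FF :: "complex \<Rightarrow> (nat \<Rightarrow> complex) \<Rightarrow> real" where
  "FF l x = ln (l2norm (Res s l x)) / ln (opnorm (Res s l))"

lemma L_facts:
  assumes "1 \<le> ln (1 / cmod l)"
  shows "l \<noteq> 0" "cmod l \<le> 1"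
proof -
  show "l \<noteq> 0" using assms by (auto)
  then have "0 < 1 / cmod l" by simp
  have "1 < 1 / cmod l" using assms \<open>0 < 1 / cmod l\<close> by (metis ln_less_zero_iff ln_one less_le_not_le linorder_not_le not_one_le_zero order_less_le_trans zero_less_one ln_less_cancel_iff)
  then show "cmod l \<le> 1" using \<open>l \<noteq> 0\<close> by (simp add: field_simps)
qed

lemma Rx_pos:
  assumes l: "l \<noteq> 0" and x: "x \<in> l2" and nz: "x (prod_encode (i,m)) \<noteq> 0" and z0: "\<forall>j<m. x (prod_encode (i,j)) = 0"
  shows "cmod (x (prod_encode (i,m))) / cmod l \<le> l2norm (Res s l x)" "0 < l2norm (Res s l x)"
proof -
  have "Res s l x \<in> l2" using Res_bounded[OF l s] x by (auto simp: bounded_op_def)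
  then have "cmod (Res s l x (prod_encode (i,m))) \<le> l2norm (Res s l x)" by (rule l2norm_coord)
  then show A: "cmod (x (prod_encode (i,m))) / cmod l \<le> l2norm (Res s l x)"
    using Res_first[OF z0, of s l] by (simp add: norm_divide)
  have "0 < cmod (x (prod_encode (i,m))) / cmod l" using nz l by simp
  then show "0 < l2norm (Res s l x)" using A by linarith
qed

lemma upper_ratio:
  assumes x: "x \<in> l2" and S: "0 \<le> S" "S \<le> 1"
    and sup: "\<And>i j. x (prod_encode (i,j)) \<noteq> 0 \<Longrightarrow> s i \<le> S"
    and nz: "x (prod_encode (i0,j0)) \<noteq> 0"
  shows "Limsup (at 0) (\<lambda>l. ereal (FF l x)) \<le> ereal S"
proof (rule ereal_upper_eps)
  fix e :: real assume e: "0 < e"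
  obtain m where m: "x (prod_encode (i0,m)) \<noteq> 0" "\<forall>j<m. x (prod_encode (i0,j)) = 0"
    using first_nz[of x i0 j0, OF nz] by blast
  have xpos: "0 < l2norm x"
  proof -
    have "0 < cmod (x (prod_encode (i0,m)))" using m(1) by simp
    then show ?thesis using l2norm_coord[OF x, of "prod_encode (i0,m)"] by linarith
  qed
  define c where "c = ln (l2norm x)"
  have ev: "eventually (\<lambda>L. (0 \<le> ln 2 + L + S*(L + ln 2)^2/4 + c \<and> 0 < L + L^2/4 - 1 \<and>
      (ln 2 + L + S*(L + ln 2)^2/4 + c)/(L + L^2/4 - 1) < S + e) \<and> 1 \<le> L) at_top"
    by (intro eventually_conj asym_upper S e eventually_ge_at_top)
  have ev0: "eventually (\<lambda>l. (0 \<le> ln 2 + ln (1 / cmod l) + S*(ln (1 / cmod l) + ln 2)^2/4 + c \<and> 0 < ln (1 / cmod l) + (ln (1 / cmod l))^2/4 - 1 \<and>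
      (ln 2 + ln (1 / cmod l) + S*(ln (1 / cmod l) + ln 2)^2/4 + c)/(ln (1 / cmod l) + (ln (1 / cmod l))^2/4 - 1) < S + e) \<and> 1 \<le> ln (1 / cmod l)) (at 0)"
    using eventually_compose_filterlim[OF ev Lfilter] by simp
  show "Limsup (at 0) (\<lambda>l. ereal (FF l x)) \<le> ereal (S + e)"
  proof (rule Limsup_bounded, rule eventually_mono[OF ev0], clarify)
    fix l :: complex
    define L where "L = ln (1 / cmod l)"
    assume h: "0 \<le> ln 2 + ln (1 / cmod l) + S*(ln (1 / cmod l) + ln 2)^2/4 + c"
      "0 < ln (1 / cmod l) + (ln (1 / cmod l))^2/4 - 1"
      "(ln 2 + ln (1 / cmod l) + S*(ln (1 / cmod l) + ln 2)^2/4 + c)/(ln (1 / cmod l) + (ln (1 / cmod l))^2/4 - 1) < S + e"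
      "1 \<le> ln (1 / cmod l)"
    note h = h[folded L_def]
    have l: "l \<noteq> 0" "cmod l \<le> 1" using L_facts h(4) unfolding L_def by auto
    have r0: "0 < 1 / cmod l" using l by simp
    have Rb: "l2norm (Res s l x) \<le> 2 * (1 / cmod l) * exp (S * (ln (2 / cmod l))^2 / 4) * l2norm x"
      using Res_bound[OF l(1) x S s] sup by blast
    have Rp: "0 < l2norm (Res s l x)" using Rx_pos[OF l(1) x m] by simp
    have ln2: "ln (2 / cmod l) = ln 2 + L" unfolding L_def using l by (simp add: ln_div ln_mult)
    have "ln (l2norm (Res s l x)) \<le> ln (2 * (1 / cmod l) * exp (S * (ln (2 / cmod l))^2 / 4) * l2norm x)"
      using Rb Rp by (subst ln_le_cancel_iff) auto
    also have "\<dots> = ln 2 + L + S*(L + ln 2)^2/4 + c"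
      using ln4[OF _ r0 xpos, of 2 "S * (ln (2 / cmod l))^2 / 4"] unfolding ln2 c_def L_def by (simp add: add.commute)
    finally have num: "ln (l2norm (Res s l x)) \<le> ln 2 + L + S*(L + ln 2)^2/4 + c" .
    have den: "L + L^2/4 - 1 \<le> ln (opnorm (Res s l))"
      using opn_bounds(2)[OF l] h(4) unfolding L_def by simp
    have "FF l x \<le> (ln 2 + L + S*(L + ln 2)^2/4 + c)/(L + L^2/4 - 1)"
      unfolding FF_def by (rule div_upper[OF h(2) den num h(1)])
    then show "ereal (FF l x) \<le> ereal (S + e)" using h(3) by simp
  qed
qed

lemma lower_pos:
  assumes x: "x \<in> l2" and nz: "x (prod_encode (i,m)) \<noteq> 0" and z0: "\<forall>j<m. x (prod_encode (i,j)) = 0"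
    and sp: "0 < s i"
  shows "ereal (s i) \<le> Limsup (at 0) (\<lambda>l. ereal (FF l x))"
proof (rule ereal_lower_eps)
  fix e :: real assume e: "0 < e"
  show "ereal (s i - e) \<le> Limsup (at 0) (\<lambda>l. ereal (FF l x))"
  proof (rule Limsup_lower_freq)
    fix d :: real assume d: "0 < d"
    define c where "c = ln (cmod (x (prod_encode (i,m))))"
    define \<sigma> where "\<sigma> = s i"
    define M where "M = real m"
    have ev: "eventually (\<lambda>L. (0 \<le> \<sigma>*L - 2*M \<and> 0 \<le> c + L + \<sigma>*L^2/4 - M*L + (M^2 - 1)/\<sigma> \<and>
      \<sigma> - e < (c + L + \<sigma>*L^2/4 - M*L + (M^2 - 1)/\<sigma>)/(ln 2 + L + (L + ln 2)^2/4)) \<and>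
      (1 \<le> L \<and> ln (1/d) + 1 \<le> L)) at_top"
      by (intro eventually_conj asym_lower eventually_ge_at_top) (use sp e in \<open>auto simp: \<sigma>_def\<close>)
    then obtain N where "\<forall>L\<ge>N. (0 \<le> \<sigma>*L - 2*M \<and> 0 \<le> c + L + \<sigma>*L^2/4 - M*L + (M^2 - 1)/\<sigma> \<and>
      \<sigma> - e < (c + L + \<sigma>*L^2/4 - M*L + (M^2 - 1)/\<sigma>)/(ln 2 + L + (L + ln 2)^2/4)) \<and>
      (1 \<le> L \<and> ln (1/d) + 1 \<le> L)" unfolding eventually_at_top_linorder by blast
    then have h: "0 \<le> \<sigma>*N - 2*M" "0 \<le> c + N + \<sigma>*N^2/4 - M*N + (M^2 - 1)/\<sigma>"
      "\<sigma> - e < (c + N + \<sigma>*N^2/4 - M*N + (M^2 - 1)/\<sigma>)/(ln 2 + N + (N + ln 2)^2/4)"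
      "1 \<le> N" "ln (1/d) + 1 \<le> N" by auto
    define L where "L = N"
    note h = h[folded L_def]
    define \<rho> where "\<rho> = exp (-L)"
    have \<rho>0: "0 < \<rho>" by (simp add: \<rho>_def)
    define v where "v = (\<sigma>*L - 2*M)/2"
    have v0: "0 \<le> v" using h(1) by (simp add: v_def)
    define k where "k = nat \<lfloor>v\<rfloor>"
    define K where "K = real k"
    have fc: "v^2 - 1 \<le> 2 * v * K - K^2" unfolding K_def k_def by (rule floor_choice(3)[OF v0])
    obtain l where l: "cmod l = \<rho>"
      and lb: "cmod (x (prod_encode (i,m))) * aa (s i) ^ ((2*m+k)*k) * (1/\<rho>)^(k+1) \<le> cmod (Res s l x (prod_encode (i, m+k)))"
      using Res_lower[OF z0 \<rho>0, of s k] by blast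
    have l0: "l \<noteq> 0" using l \<rho>0 by auto
    have Ll: "ln (1 / cmod l) = L"
    proof -
      have "cmod l = inverse (exp L)" using l by (simp add: \<rho>_def exp_minus)
      then have "1 / cmod l = exp L" by (simp add: inverse_eq_divide)
      then show ?thesis by simp
    qed
    have ld: "cmod l < d"
    proof -
      have "ln (1/d) < L" using h(5) by simp
      then have "- ln d < L" using d by (simp add: ln_div)
      then have "exp (-L) < exp (ln d)" by simp
      then show ?thesis using d l by (simp add: \<rho>_def)
    qed
    have lle: "cmod l \<le> 1" using l h(4) by (simp add: \<rho>_def)
    have xm: "0 < cmod (x (prod_encode (i,m)))" using nz by simp
    have aapow: "aa (s i) ^ ((2*m+k)*k) = exp (- ((2*M + K) * K) / \<sigma>)"
    proof -
      have "aa (s i) = exp (- 1 / \<sigma>)" using sp by (simp add: aa_def \<sigma>_def)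
      then have "aa (s i) ^ ((2*m+k)*k) = exp (- 1 / \<sigma>) ^ ((2*m+k)*k)" by simp
      also have "\<dots> = exp (real ((2*m+k)*k) * (- 1 / \<sigma>))" by (rule exp_of_nat_mult[symmetric])
      also have "real ((2*m+k)*k) * (- 1 / \<sigma>) = - ((2*M + K) * K) / \<sigma>" by (simp add: M_def K_def)
      finally show ?thesis .
    qed
    have rpow: "(1/\<rho>)^(k+1) = exp ((K + 1) * L)"
    proof -
      have "(1/\<rho>) = exp L" unfolding \<rho>_def by (simp add: exp_minus inverse_eq_divide)
      then have "(1/\<rho>)^(k+1) = exp L ^ (k+1)" by simp
      also have "\<dots> = exp (real (k+1) * L)" by (rule exp_of_nat_mult[symmetric])
      also have "real (k+1) * L = (K + 1) * L" by (simp add: K_def)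
      finally show ?thesis .
    qed
    define lhs where "lhs = cmod (x (prod_encode (i,m))) * aa (s i) ^ ((2*m+k)*k) * (1/\<rho>)^(k+1)"
    have lhs_eq: "lhs = cmod (x (prod_encode (i,m))) * exp (- ((2*M + K) * K) / \<sigma>) * exp ((K + 1) * L)"
      unfolding lhs_def aapow rpow by simp
    have lhs0: "0 < lhs" unfolding lhs_eq using xm by simp
    have ln_lhs: "ln lhs = c + (- ((2*M + K) * K) / \<sigma> + (K + 1) * L)"
      unfolding lhs_eq c_def using xm by (simp add: ln_mult)
    have key: "c + L + \<sigma>*L^2/4 - M*L + (M^2 - 1)/\<sigma> \<le> ln lhs"
    proof -
      have "(- ((2*M + K) * K) / \<sigma> + (K + 1) * L) - (L + \<sigma>*L^2/4 - M*L + (M^2 - 1)/\<sigma>)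
          = ((2 * v * K - K^2) - (v^2 - 1)) / \<sigma>"
        using sp unfolding v_def \<sigma>_def by (simp add: field_simps power2_eq_square)
      also have "\<dots> \<ge> 0" using fc sp by (simp add: \<sigma>_def)
      finally show ?thesis unfolding ln_lhs by linarith
    qed
    have Rl2: "Res s l x \<in> l2" using Res_bounded[OF l0 s] x by (auto simp: bounded_op_def)
    have "lhs \<le> l2norm (Res s l x)"
      using lb l2norm_coord[OF Rl2, of "prod_encode (i, m+k)"] unfolding lhs_def by linarith
    then have num: "ln lhs \<le> ln (l2norm (Res s l x))" using lhs0 by simp
    have L1: "1 \<le> ln (1 / cmod l)" using Ll h(4) by simp
    have dpos: "0 < ln (opnorm (Res s l))" using opn_bounds(1)[OF l0 lle L1] .
    have dup: "ln (opnorm (Res s l)) \<le> ln 2 + L + (L + ln 2)^2/4" using opn_bounds(3)[OF l0 lle L1] Ll by simp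
    have "(c + L + \<sigma>*L^2/4 - M*L + (M^2 - 1)/\<sigma>)/(ln 2 + L + (L + ln 2)^2/4) \<le> FF l x"
      unfolding FF_def by (rule div_lower[OF dpos dup _ h(2)]) (use key num in linarith)
    then have "s i - e \<le> FF l x" using h(3) by (simp add: \<sigma>_def)
    then show "\<exists>l. l \<noteq> 0 \<and> cmod l < d \<and> s i - e \<le> FF l x" using l0 ld by blast
  qed
qed

lemma lower_zero:
  assumes x: "x \<in> l2" and nz: "x (prod_encode (i,m)) \<noteq> 0" and z0: "\<forall>j<m. x (prod_encode (i,j)) = 0"
  shows "ereal 0 \<le> Limsup (at 0) (\<lambda>l. ereal (FF l x))"
proof (rule le_Limsup)
  show "at (0::complex) \<noteq> bot" by simp
  define c where "c = ln (cmod (x (prod_encode (i,m))))"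
  have xm: "0 < cmod (x (prod_encode (i,m)))" using nz by simp
  have ev: "eventually (\<lambda>L. (0 \<le> c + L \<and> 0 \<le> L) \<and> 1 \<le> L) at_top"
    by (intro eventually_conj asym_zero eventually_ge_at_top)
  have ev0: "eventually (\<lambda>l. (0 \<le> c + ln (1 / cmod l) \<and> 0 \<le> ln (1 / cmod l)) \<and> 1 \<le> ln (1 / cmod l)) (at 0)"
    using eventually_compose_filterlim[OF ev Lfilter] by simp
  show "\<forall>\<^sub>F l in at 0. ereal 0 \<le> ereal (FF l x)"
  proof (rule eventually_mono[OF ev0], clarify)
    fix l :: complex
    assume h: "0 \<le> c + ln (1 / cmod l)" "1 \<le> ln (1 / cmod l)"
    have l: "l \<noteq> 0" "cmod l \<le> 1" using L_facts h(2) by auto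
    have "cmod (x (prod_encode (i,m))) / cmod l \<le> l2norm (Res s l x)" by (rule Rx_pos(1)[OF l(1) x nz z0])
    moreover have "0 < cmod (x (prod_encode (i,m))) / cmod l" using xm l by simp
    ultimately have "ln (cmod (x (prod_encode (i,m))) / cmod l) \<le> ln (l2norm (Res s l x))" by simp
    moreover have "ln (cmod (x (prod_encode (i,m))) / cmod l) = c + ln (1 / cmod l)"
      using xm l by (simp add: c_def ln_div)
    ultimately have "0 \<le> ln (l2norm (Res s l x))" using h(1) by linarith
    moreover have "0 < ln (opnorm (Res s l))" using opn_bounds(1)[OF l h(2)] .
    ultimately show "ereal 0 \<le> ereal (FF l x)" unfolding FF_def by simp
  qed
qed

end


context setting
begin

lemma local_power_FF:
  assumes x: "x \<in> l2"
  shows "local_power (Top s) x = Limsup (at 0) (\<lambda>l. ereal (FF l x))"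
  unfolding local_power_def
proof (rule Limsup_eq)
  have "eventually (\<lambda>l::complex. l \<noteq> 0) (at 0)" by (simp add: eventually_at_filter)
  then show "\<forall>\<^sub>F l in at 0. ereal (ln (l2norm (resolvent (Top s) l x)) / ln (opnorm (resolvent (Top s) l))) = ereal (FF l x)"
    by (rule eventually_mono) (simp add: FF_def resolvent_eq[OF _ s x] opnorm_resolvent[OF _ s])
qed

lemma local_power_eq:
  assumes x: "x \<in> l2" and x0: "x \<noteq> (\<lambda>n. 0)"
  shows "local_power (Top s) x = ereal (Sup (s ` {i. \<exists>j. x (prod_encode (i,j)) \<noteq> 0}))"
proof -
  define I where "I = {i. \<exists>j. x (prod_encode (i,j)) \<noteq> 0}"
  define S where "S = Sup (s ` I)"
  obtain n where n: "x n \<noteq> 0" using x0 by auto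
  obtain i0 j0 where ij: "n = prod_encode (i0,j0)" by (metis prod_decode_inverse surj_pair)
  have nz0: "x (prod_encode (i0,j0)) \<noteq> 0" using n ij by simp
  have I0: "i0 \<in> I" using nz0 by (auto simp: I_def)
  have bdd: "bdd_above (s ` I)" using s by (auto intro!: bdd_aboveI[of _ 1])
  have sle: "s i \<le> S" if "i \<in> I" for i unfolding S_def using bdd that by (auto intro: cSup_upper)
  have S0: "0 \<le> S" using sle[OF I0] s by (meson order_trans)
  have S1: "S \<le> 1" unfolding S_def using I0 s by (intro cSup_least) auto
  have up: "Limsup (at 0) (\<lambda>l. ereal (FF l x)) \<le> ereal S"
  proof (rule upper_ratio[OF x S0 S1 _ nz0])
    fix i j assume "x (prod_encode (i,j)) \<noteq> 0"
    then have "i \<in> I" by (auto simp: I_def)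
    then show "s i \<le> S" by (rule sle)
  qed
  have lo: "ereal S \<le> Limsup (at 0) (\<lambda>l. ereal (FF l x))"
  proof (rule ereal_lower_eps)
    fix e :: real assume e: "0 < e"
    have "S - e < Sup (s ` I)" using e by (simp add: S_def)
    then obtain i where i: "i \<in> I" "S - e < s i" using less_cSup_iff[of "s ` I"] bdd I0 by auto
    then obtain j where "x (prod_encode (i,j)) \<noteq> 0" by (auto simp: I_def)
    then obtain m where m: "x (prod_encode (i,m)) \<noteq> 0" "\<forall>j<m. x (prod_encode (i,j)) = 0"
      using first_nz[of x i j] by blast
    have "ereal (s i) \<le> Limsup (at 0) (\<lambda>l. ereal (FF l x))"
    proof (cases "s i = 0")
      case True then show ?thesis using lower_zero[OF x m] by simp
    next
      case False then have "0 < s i" using s by (metis order_le_less)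
      then show ?thesis by (rule lower_pos[OF x m])
    qed
    moreover have "ereal (S - e) \<le> ereal (s i)" using i by simp
    ultimately show "ereal (S - e) \<le> Limsup (at 0) (\<lambda>l. ereal (FF l x))" by (rule order_trans[rotated])
  qed
  show ?thesis using up lo local_power_FF[OF x] by (simp add: S_def I_def)
qed

end


lemma labels:
  assumes rc: "right_closed \<sigma>" and sub: "\<sigma> \<subseteq> {0..1}" and one: "1 \<in> \<sigma>"
  shows "\<exists>s::nat\<Rightarrow>real. s 0 = 1 \<and> (\<forall>i. s i \<in> \<sigma>) \<and> (\<forall>t\<in>\<sigma>. \<forall>e>0. \<exists>i. t - e < s i \<and> s i \<le> t)"
proof -
  have rcS: "Sup Y \<in> \<sigma>" if "Y \<noteq> {}" "Y \<subseteq> \<sigma>" "bdd_above Y" for Y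
    using rc that unfolding right_closed_def by blast
  define a where "a q = Sup (\<sigma> \<inter> {..q})" for q :: real
  define b where "b q = Inf (\<sigma> \<inter> {q..})" for q :: real
  define D where "D = insert 1 (a ` {q\<in>\<rat>. \<sigma> \<inter> {..q} \<noteq> {}} \<union> b ` {q\<in>\<rat>. b q \<in> \<sigma>})"
  have Dsub: "D \<subseteq> \<sigma>"
  proof -
    have "a q \<in> \<sigma>" if "\<sigma> \<inter> {..q} \<noteq> {}" for q
      unfolding a_def by (rule rcS) (use that in \<open>auto intro!: bdd_aboveI[of _ q]\<close>)
    then show ?thesis unfolding D_def using one by auto
  qed
  have Dc: "countable D" unfolding D_def
    by (intro countable_insert countable_Un countable_image countable_subset[OF _ countable_rat]) auto
  have Dne: "D \<noteq> {}" unfolding D_def by simp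
  define s where "s i = (case i of 0 \<Rightarrow> 1 | Suc n \<Rightarrow> from_nat_into D n)" for i
  have sD: "\<exists>i. s i = d" if "d \<in> D" for d
  proof -
    have "d \<in> range (from_nat_into D)" using that Dne Dc by simp
    then obtain n where "d = from_nat_into D n" by auto
    then show ?thesis by (intro exI[of _ "Suc n"]) (simp add: s_def)
  qed
  have sin: "s i \<in> \<sigma>" for i
  proof (cases i)
    case 0 then show ?thesis using one by (simp add: s_def)
  next
    case (Suc n)
    have "from_nat_into D n \<in> D" using Dne by (rule from_nat_into)
    then show ?thesis using Suc Dsub by (auto simp: s_def)
  qed
  have approx: "\<exists>i. t - e < s i \<and> s i \<le> t" if t: "t \<in> \<sigma>" and e: "0 < e" for t e
  proof (cases "\<exists>t'\<in>\<sigma>. t - e < t' \<and> t' < t")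
    case True
    then obtain t' where t': "t' \<in> \<sigma>" "t - e < t'" "t' < t" by blast
    obtain q where q: "q \<in> \<rat>" "t' < q" "q < t" using Rats_dense_in_real[OF t'(3)] by blast
    have ne: "\<sigma> \<inter> {..q} \<noteq> {}" using t' q by auto
    have bdd: "bdd_above (\<sigma> \<inter> {..q})" by (auto intro!: bdd_aboveI[of _ q])
    have "t' \<le> a q" unfolding a_def using t' q bdd by (intro cSup_upper) auto
    moreover have "a q \<le> q" unfolding a_def using ne by (intro cSup_least) auto
    moreover have "a q \<in> D" unfolding D_def using q ne by auto
    ultimately have "t - e < a q" "a q \<le> t" "a q \<in> D" using t' q by auto
    then obtain i where "s i = a q" using sD by blast
    then show ?thesis using \<open>t - e < a q\<close> \<open>a q \<le> t\<close> by (intro exI[of _ i]) simp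
  next
    case False
    have "t - e < t" using e by simp
    then obtain q where q: "q \<in> \<rat>" "t - e < q" "q < t" using Rats_dense_in_real by blast
    have ne: "\<sigma> \<inter> {q..} \<noteq> {}" using t q by auto
    have bdd: "bdd_below (\<sigma> \<inter> {q..})" by (auto intro!: bdd_belowI[of _ q])
    have "b q \<le> t" unfolding b_def using t q bdd by (intro cInf_lower) auto
    moreover have "t \<le> b q" unfolding b_def
    proof (rule cInf_greatest[OF ne])
      fix y assume y: "y \<in> \<sigma> \<inter> {q..}"
      show "t \<le> y"
      proof (rule ccontr)
        assume "\<not> t \<le> y"
        then have "y < t" by simp
        moreover have "t - e < y" using y q by auto
        ultimately show False using False y by auto
      qed
    qed
    ultimately have "b q = t" by simp
    then have "t \<in> D" unfolding D_def using q t by auto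
    then obtain i where "s i = t" using sD by blast
    then show ?thesis using e by (intro exI[of _ i]) simp
  qed
  have s0: "s 0 = 1" by (simp add: s_def)
  show ?thesis using s0 sin approx by blast
qed

theorem theoremB:
  fixes \<sigma> :: "real set"
  assumes "right_closed \<sigma>" and "\<sigma> \<subseteq> {0..1}" and "1 \<in> \<sigma>"
  shows "\<exists>T. bounded_op T \<and> quasinilpotent T \<and> power_set T = ereal ` \<sigma>"
proof -
  obtain s :: "nat \<Rightarrow> real" where s0: "s 0 = 1" and sin: "\<And>i. s i \<in> \<sigma>"
    and approx: "\<And>t e. t \<in> \<sigma> \<Longrightarrow> 0 < e \<Longrightarrow> \<exists>i. t - e < s i \<and> s i \<le> t"
    using labels[OF assms] by blast
  have s: "\<forall>i. 0 \<le> s i \<and> s i \<le> 1" using sin assms(2) by (auto simp: subset_iff)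
  interpret setting s 0 by unfold_locales (use s s0 in auto)
  have rcS: "Sup Y \<in> \<sigma>" if "Y \<noteq> {}" "Y \<subseteq> \<sigma>" "bdd_above Y" for Y
    using assms(1) that unfolding right_closed_def by blast
  have "power_set (Top s) = ereal ` \<sigma>"
  proof
    show "power_set (Top s) \<subseteq> ereal ` \<sigma>"
    proof
      fix k assume "k \<in> power_set (Top s)"
      then obtain x where x: "x \<in> l2" "x \<noteq> (\<lambda>n. 0)" "k = local_power (Top s) x"
        unfolding power_set_def by blast
      define I where "I = {i. \<exists>j. x (prod_encode (i,j)) \<noteq> 0}"
      obtain n where n: "x n \<noteq> 0" using x(2) by auto
      obtain i0 j0 where ij: "n = prod_encode (i0,j0)" by (metis prod_decode_inverse surj_pair)
      have "i0 \<in> I" using n ij by (auto simp: I_def)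
      then have "Sup (s ` I) \<in> \<sigma>" using sin s by (intro rcS) (auto intro!: bdd_aboveI[of _ 1])
      then show "k \<in> ereal ` \<sigma>" using local_power_eq[OF x(1,2)] x(3) by (simp add: I_def)
    qed
    show "ereal ` \<sigma> \<subseteq> power_set (Top s)"
    proof
      fix k assume "k \<in> ereal ` \<sigma>"
      then obtain t where t: "t \<in> \<sigma>" "k = ereal t" by blast
      define J where "J = {i. s i \<le> t}"
      obtain i0 where i0: "s i0 \<le> t" using approx[OF t(1), of 1] by auto
      define x :: "nat \<Rightarrow> complex" where "x n = (if (\<exists>i\<in>J. n = prod_encode (i,0)) then (1/2)^n else 0)" for n
      have xl2: "x \<in> l2" unfolding l2_def mem_Collect_eq
      proof (rule summable_comparison_test)
        show "summable (\<lambda>n. (1/4::real)^n)" by (rule summable_geometric) simp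
        show "\<exists>N. \<forall>n\<ge>N. norm ((cmod (x n))^2) \<le> (1/4)^n"
        proof (intro exI allI impI)
          fix n :: nat
          have "(cmod (x n))^2 \<le> ((1/2)^n)^2"
            by (intro power_mono) (auto simp: x_def norm_power)
          also have "\<dots> = ((1/2)^2)^n" by (simp only: power_mult[symmetric] mult.commute)
          also have "\<dots> = (1/4)^n" by (simp add: power2_eq_square)
          finally show "norm ((cmod (x n))^2) \<le> (1/4)^n" by simp
        qed
      qed
      have xe: "x (prod_encode (i,j)) \<noteq> 0 \<longleftrightarrow> i \<in> J \<and> j = 0" for i j
        by (auto simp: x_def)
      have x0: "x \<noteq> (\<lambda>n. 0)"
      proof
        assume "x = (\<lambda>n. 0)"
        then have "x (prod_encode (i0,0)) = 0" by simp
        then show False using xe[of i0 0] i0 by (simp add: J_def)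
      qed
      have IJ: "{i. \<exists>j. x (prod_encode (i,j)) \<noteq> 0} = J" using xe by auto
      have Jne: "J \<noteq> {}" using i0 by (auto simp: J_def)
      have bdd: "bdd_above (s ` J)" by (auto simp: J_def intro!: bdd_aboveI[of _ t])
      have "Sup (s ` J) = t"
      proof (rule antisym)
        show "Sup (s ` J) \<le> t" using Jne by (intro cSup_least) (auto simp: J_def)
        show "t \<le> Sup (s ` J)"
        proof (rule field_le_epsilon)
          fix e :: real assume e: "0 < e"
          obtain i where i: "t - e < s i" "s i \<le> t" using approx[OF t(1) e] by blast
          have "s i \<le> Sup (s ` J)" using i bdd by (intro cSup_upper) (auto simp: J_def)
          then show "t \<le> Sup (s ` J) + e" using i by linarith
        qed
      qed
      then have "local_power (Top s) x = k" using local_power_eq[OF xl2 x0] IJ t(2) by simp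
      then show "k \<in> power_set (Top s)" unfolding power_set_def using xl2 x0 by blast
    qed
  qed
  then show ?thesis using Top_bounded[OF s] Top_qn[OF s] by blast
qed


end
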